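(* Let $P$ be a recursively labelled forest poset on $\{1,2,\ldots,n\}$, and for each $i$ let $h_i:=|P_{\geq i}|$ and $\min(P_{\geq i})$ be the smallest integer in $P_{\geq i}$. Then, in $\mathbb{Q}(x_1,x_2,\ldots)$, $$L(P):=\sum_{w \in \mathcal{L}(P)} \mathrm{wt}(w) = \frac{[n]!}{\prod_{i=1}^n F^{\min(P_{\geq i})-1}[h_i]}.$$
   Context: Work in the field $\mathbb{Q}(x_1,x_2,\ldots)$ of rational functions in countably many indeterminates, and let $F$ be the field endomorphism ("Frobenius map") with $F(x_i)=x_{i+1}$ for all $i$. Define $[n]:=x_1+x_2+\cdots+x_n$ (so $F^{j}[n]=x_{j+1}+\cdots+x_{j+n}$), $[0]!:=1$ and $[n]!:=[n]\cdot F([n-1]!)=\prod_{j=0}^{n-1}F^j[n-j]$. For a $k$-element set $S=\{i_1>i_2>\cdots>i_k\}$ of positive integers define $\mathrm{wt}(S):=\frac{\prod_{j=1}^k F^{i_j-1}[j]}{[k]!}$ (with $\mathrm{wt}(\emptyset)=1$). For a permutation $w=(w_1,\ldots,w_n)$ of $\{1,\ldots,n\}$ in one-line notation define $\mathrm{wt}(w)$ recursively: the empty permutation ($n=0$) has weight $1$; otherwise let $k:=w_1-1$, let $S(w):=\{i: w_i\le k\}$, let $a$ be the permutation of $\{1,\ldots,k\}$ obtained by listing the values $w_i\le k$ in order of increasing $i$, and let $\hat b$ be the permutation of $\{1,\ldots,n-k-1\}$ obtained by listing the values $w_i-k-1$ for those $i$ with $w_i>k+1$, in order of increasing $i$; then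 $\mathrm{wt}(w):=\mathrm{wt}(S(w))\cdot \mathrm{wt}(a)\cdot F^{k+1}(\mathrm{wt}(\hat b))$. A forest poset on $\{1,\ldots,n\}$ is a partial order $<_P$ in which every element covers at most one other element; $P_{\geq i}:=\{j: j\geq_P i\}$ is the subtree rooted at $i$. $P$ is recursively labelled if each $P_{\geq i}$ is an interval of consecutive integers. $\mathcal{L}(P)$ is the set of linear extensions of $P$: permutations $w$ such that $i<_P j$ implies $i$ appears before $j$ in the word $w_1w_2\cdots w_n$. *)

theory Defs
  imports Main
begin

text \<open>Generic model of Q(x_1,x_2,...): a field of characteristic 0 together with
a sequence x :: nat => 'a (x 0 is unused). The Frobenius F acts by substitution
x_i |-> x_(i+1); hence F^j applied to an expression e(x) is e(\<lambda>i. x (i+j)).\<close>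

text \<open>brk x j m = F^j [m] = x_(j+1) + ... + x_(j+m)\<close>
definition brk :: "(nat \<Rightarrow> 'a::field) \<Rightarrow> nat \<Rightarrow> nat \<Rightarrow> 'a" where
  "brk x j m = (\<Sum>i\<in>{j<..j+m}. x i)"

text \<open>qfact x n = [n]! = prod_{j<n} F^j [n-j]\<close>
definition qfact :: "(nat \<Rightarrow> 'a::field) \<Rightarrow> nat \<Rightarrow> 'a" where
  "qfact x n = (\<Prod>j<n. brk x j (n - j))"

definition wt_set :: "(nat \<Rightarrow> 'a::field) \<Rightarrow> nat set \<Rightarrow> 'a" where
  "wt_set x S = (let L = rev (sorted_list_of_set S); k = card S in
     (\<Prod>j<k. brk x (L ! j - 1) (j + 1)) / qfact x k)"

text \<open>Weight of a permutation in one-line notation w = v # rest, with k = v - 1: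
S(w) = positions i (1-based) with w_i \<le> k, i.e. w_i < v; a = values < v in order;
hat b = values > v shifted down by v; the factor F^(k+1) = F^v acts by shifting x by v.\<close>
fun wt_perm :: "(nat \<Rightarrow> 'a::field) \<Rightarrow> nat list \<Rightarrow> 'a" where
  "wt_perm x [] = 1"
| "wt_perm x (v # rest) =
     wt_set x {i + 2 | i. i < length rest \<and> rest ! i < v}
     * wt_perm x (filter (\<lambda>u. u < v) rest)
     * wt_perm (\<lambda>i. x (i + v)) (map (\<lambda>u. u - v) (filter (\<lambda>u. v < u) rest))"

text \<open>Posets on {1..n} as relations r (pairs (i,j) meaning i \<le>_P j).\<close>
definition covers :: "(nat \<times> nat) set \<Rightarrow> nat \<Rightarrow> nat \<Rightarrow> bool" where
  "covers r j i \<longleftrightarrow> (i, j) \<in> r \<and> i \<noteq> j \<and>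
     \<not> (\<exists>k. k \<noteq> i \<and> k \<noteq> j \<and> (i, k) \<in> r \<and> (k, j) \<in> r)"

definition forest_poset :: "nat \<Rightarrow> (nat \<times> nat) set \<Rightarrow> bool" where
  "forest_poset n r \<longleftrightarrow> partial_order_on {1..n} r \<and>
     (\<forall>j i i'. covers r j i \<and> covers r j i' \<longrightarrow> i = i')"

definition up_set :: "(nat \<times> nat) set \<Rightarrow> nat \<Rightarrow> nat set" where
  "up_set r i = {j. (i, j) \<in> r}"

definition recursively_labelled :: "nat \<Rightarrow> (nat \<times> nat) set \<Rightarrow> bool" where
  "recursively_labelled n r \<longleftrightarrow> (\<forall>i\<in>{1..n}. \<exists>a b. up_set r i = {a..b})"

definition lin_ext :: "nat \<Rightarrow> (nat \<times> nat) set \<Rightarrow> nat list set" where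
  "lin_ext n r = {w. distinct w \<and> set w = {1..n} \<and>
     (\<forall>p q. p < length w \<and> q < length w \<and> (w ! p, w ! q) \<in> r \<and> w ! p \<noteq> w ! q \<longrightarrow> p < q)}"

end

theory Submission
  imports Defs
begin


lemma brk_alt: "brk x j m = (\<Sum>i<m. x (Suc (j + i)))"
proof (induction m)
  case 0 then show ?case by (simp add: brk_def)
next
  case (Suc m)
  have "{j<..j + Suc m} = insert (Suc (j+m)) {j<..j+m}" by auto
  then show ?case using Suc by (simp add: brk_def)
qed

lemma brk_shift: "brk (\<lambda>i. x (i + v)) j m = brk x (j + v) m"
  by (simp add: brk_alt algebra_simps)

lemma brk_shift1: "brk (\<lambda>i. x (Suc i)) j m = brk x (Suc j) m"
  using brk_shift[of x 1 j m] by simp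

lemma brk_shiftS: "brk (\<lambda>i. x (Suc (i + k))) j m = brk x (Suc (j + k)) m"
  by (simp add: brk_alt algebra_simps)

lemma brk_zero[simp]: "brk x j 0 = 0"
  by (simp add: brk_def)

lemma brk_split: "brk x a k + brk x (a + k) l = brk x a (k + l)"
  by (induction l) (simp_all add: brk_alt algebra_simps)

lemma brk_interval: "1 \<le> a \<Longrightarrow> brk x (a - 1) (Suc b - a) = (\<Sum>i\<in>{a..b}. x i)"
proof -
  assume "1 \<le> a"
  then have "{a - 1<..a - 1 + (Suc b - a)} = {a..b}" by auto
  then show ?thesis by (simp add: brk_def)
qed

lemma qfact_nz: assumes "\<And>j m. 0 < m \<Longrightarrow> brk x j m \<noteq> 0" shows "qfact x k \<noteq> 0"
  using assms by (simp add: qfact_def)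

lemma qfact_Suc: "qfact x (Suc m) = brk x 0 (Suc m) * qfact (\<lambda>i. x (i + 1)) m"
  unfolding qfact_def prod.lessThan_Suc_shift by (simp add: brk_shift1)

lemma prod_split_add: "(\<Prod>i<k+(m::nat). f i) = (\<Prod>i<k. f i) * (\<Prod>i<m. f (k + i))"
  by (induct m) (simp_all add: algebra_simps)

lemma qfact_split:
  assumes "k \<le> N"
  shows "(\<Prod>j<k. brk x (1 + j) (N - j)) * qfact (\<lambda>i. x (i + Suc k)) (N - k)
       = qfact (\<lambda>i. x (i + 1)) N"
proof -
  have "qfact (\<lambda>i. x (i + 1)) N = (\<Prod>j<k + (N-k). brk x (1 + j) (N - j))"
    using assms by (simp add: qfact_def brk_shift1 algebra_simps)
  also have "\<dots> = (\<Prod>j<k. brk x (1 + j) (N - j)) * (\<Prod>i<N-k. brk x (1 + (k+i)) (N - (k+i)))"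
    by (rule prod_split_add)
  also have "(\<Prod>i<N-k. brk x (1 + (k+i)) (N - (k+i))) = qfact (\<lambda>i. x (i + Suc k)) (N - k)"
    by (simp add: qfact_def brk_shiftS algebra_simps)
  finally show ?thesis by simp
qed

definition Pw :: "(nat \<Rightarrow> 'a::field) \<Rightarrow> nat set \<Rightarrow> 'a" where
  "Pw x S = (\<Prod>i\<in>S. brk x (i - 1) (card {s\<in>S. i \<le> s}))"

lemma Pw_insert:
  assumes "finite S" "\<forall>s\<in>S. c < s"
  shows "Pw x (insert c S) = brk x (c - 1) (Suc (card S)) * Pw x S"
proof -
  have "c \<notin> S" using assms by auto
  have 1: "{s\<in>insert c S. c \<le> s} = insert c S" using assms by auto
  have 2: "\<And>i. i \<in> S \<Longrightarrow> {s\<in>insert c S. i \<le> s} = {s\<in>S. i \<le> s}" using assms by auto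
  show ?thesis unfolding Pw_def
    using assms \<open>c \<notin> S\<close> 1 2 by (simp cong: prod.cong)
qed

lemma subset_sum:
  "(\<Sum>S\<in>{S. S \<subseteq> {Suc a..a + N} \<and> card S = k}. Pw x S) = (\<Prod>j<k. brk x (a + j) (N - j))"
proof (induction N arbitrary: a k)
  case 0
  show ?case
  proof (cases k)
    case 0
    have "{S. S \<subseteq> {Suc a..a + 0} \<and> card S = k} = {{}}" using 0 by auto
    then show ?thesis using 0 by (simp add: Pw_def)
  next
    case (Suc k')
    have "{S. S \<subseteq> {Suc a..a + 0} \<and> card S = k} = {}"
    proof -
      have "\<And>S. S \<subseteq> {Suc a..a + 0} \<Longrightarrow> S = {}" by auto
      then show ?thesis using Suc by force
    qed
    moreover have "(\<Prod>j<k. brk x (a + j) (0 - j)) = 0"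
      using Suc by (simp add: prod.lessThan_Suc_shift)
    ultimately show ?thesis by (metis sum.empty)
  qed
next
  case (Suc N)
  show ?case
  proof (cases k)
    case 0
    have "{S. S \<subseteq> {Suc a..a + Suc N} \<and> card S = k} = {{}}"
      using 0 by (auto simp: finite_subset)
    then show ?thesis using 0 by (simp add: Pw_def)
  next
    case (Suc k')
    define A where "A = {S. S \<subseteq> {Suc (Suc a)..Suc a + N} \<and> card S = k}"
    define B where "B = {S. S \<subseteq> {Suc (Suc a)..Suc a + N} \<and> card S = k'}"
    have split: "{S. S \<subseteq> {Suc a..a + Suc N} \<and> card S = k} = A \<union> insert (Suc a) ` B"
    proof
      show "{S. S \<subseteq> {Suc a..a + Suc N} \<and> card S = k} \<subseteq> A \<union> insert (Suc a) ` B"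
      proof
        fix S assume S: "S \<in> {S. S \<subseteq> {Suc a..a + Suc N} \<and> card S = k}"
        show "S \<in> A \<union> insert (Suc a) ` B"
        proof (cases "Suc a \<in> S")
          case True
          have "S - {Suc a} \<in> B" using S True Suc unfolding B_def
            by (auto simp: finite_subset)
          moreover have "S = insert (Suc a) (S - {Suc a})" using True by auto
          ultimately show ?thesis by blast
        next
          case False
          have "S \<subseteq> {Suc (Suc a)..Suc a + N}"
          proof
            fix y assume "y \<in> S"
            then have "y \<in> {Suc a..a + Suc N}" "y \<noteq> Suc a" using S False by auto
            then show "y \<in> {Suc (Suc a)..Suc a + N}" by auto
          qed
          then have "S \<in> A" using S unfolding A_def by auto
          then show ?thesis by blast
        qed
      qed
      show "A \<union> insert (Suc a) ` B \<subseteq> {S. S \<subseteq> {Suc a..a + Suc N} \<and> card S = k}"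
      proof
        fix S assume "S \<in> A \<union> insert (Suc a) ` B"
        then show "S \<in> {S. S \<subseteq> {Suc a..a + Suc N} \<and> card S = k}"
        proof
          assume "S \<in> A" then show ?thesis unfolding A_def by auto
        next
          assume "S \<in> insert (Suc a) ` B"
          then obtain T where T: "T \<in> B" "S = insert (Suc a) T" by auto
          have "finite T" using T unfolding B_def using finite_subset by blast
          moreover have "Suc a \<notin> T" using T unfolding B_def by auto
          ultimately show ?thesis using T Suc unfolding B_def by auto
        qed
      qed
    qed
    have finA: "finite A" unfolding A_def by (rule finite_subset[of _ "Pow {Suc (Suc a)..Suc a + N}"]) auto
    have finB: "finite B" unfolding B_def by (rule finite_subset[of _ "Pow {Suc (Suc a)..Suc a + N}"]) auto
    have disj: "A \<inter> insert (Suc a) ` B = {}" unfolding A_def B_def by auto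
    have inj: "inj_on (insert (Suc a)) B"
      unfolding B_def inj_on_def by (metis Diff_insert_absorb atLeastAtMost_iff mem_Collect_eq not_less_eq_eq order_refl subsetD)
    have sB: "(\<Sum>S\<in>insert (Suc a) ` B. Pw x S) = brk x a k * (\<Sum>S\<in>B. Pw x S)"
    proof -
      have "(\<Sum>S\<in>insert (Suc a) ` B. Pw x S) = (\<Sum>S\<in>B. Pw x (insert (Suc a) S))"
        using inj by (simp add: sum.reindex)
      also have "\<dots> = (\<Sum>S\<in>B. brk x a k * Pw x S)"
      proof (rule sum.cong)
        fix S assume "S \<in> B"
        then have "finite S" "\<forall>s\<in>S. Suc a < s" "card S = k'" unfolding B_def
          using finite_subset by auto
        then show "Pw x (insert (Suc a) S) = brk x a k * Pw x S"
          using Pw_insert[of S "Suc a" x] Suc by simp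
      qed simp
      finally show ?thesis by (simp add: sum_distrib_left)
    qed
    have IA: "(\<Sum>S\<in>A. Pw x S) = (\<Prod>j<k. brk x (Suc a + j) (N - j))"
      using Suc.IH[of "Suc a" k] unfolding A_def by simp
    have IB: "(\<Sum>S\<in>B. Pw x S) = (\<Prod>j<k'. brk x (Suc a + j) (N - j))"
      using Suc.IH[of "Suc a" k'] unfolding B_def by simp
    define Q where "Q = (\<Prod>j<k'. brk x (Suc a + j) (N - j))"
    have "(\<Sum>S\<in>{S. S \<subseteq> {Suc a..a + Suc N} \<and> card S = k}. Pw x S)
        = brk x a k * Q + Q * brk x (Suc a + k') (N - k')"
      unfolding split using finA finB disj sB IA IB Suc
      by (simp add: sum.union_disjoint Q_def)
    also have "\<dots> = Q * (brk x a k + brk x (Suc a + k') (N - k'))" by (simp add: algebra_simps)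
    also have "\<dots> = Q * brk x a (Suc N)"
    proof (cases "k' \<le> N")
      case True
      then show ?thesis using brk_split[of x a k "N - k'"] Suc by simp
    next
      case False
      then have "N \<in> {..<k'}" by auto
      then have "Q = 0" unfolding Q_def
        by (intro prod_zero) (auto intro!: bexI[of _ N])
      then show ?thesis by simp
    qed
    also have "\<dots> = (\<Prod>j<k. brk x (a + j) (Suc N - j))"
      unfolding Q_def Suc prod.lessThan_Suc_shift by (simp del: prod.lessThan_Suc add: algebra_simps)
    finally show ?thesis .
  qed
qed



lemma wt_set_Pw:
  assumes "finite S"
  shows "wt_set x S = Pw x S / qfact x (card S)"
proof -
  define L where "L = rev (sorted_list_of_set S)"
  have len: "length L = card S" unfolding L_def using assms by simp
  have setL: "set L = S" unfolding L_def using assms by simp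
  have dist: "distinct L" unfolding L_def using assms by simp
  have sw: "sorted_wrt (>) L" unfolding L_def sorted_wrt_rev
    using strict_sorted_list_of_set by (simp add: sorted_wrt_rev)
  have lt: "\<And>i j. i < j \<Longrightarrow> j < length L \<Longrightarrow> L ! j < L ! i"
    using sw by (simp add: sorted_wrt_iff_nth_less)
  have bij: "bij_betw (\<lambda>j. L ! j) {..<card S} S"
    unfolding bij_betw_def
    using dist len setL by (auto simp: inj_on_def nth_eq_iff_index_eq in_set_conv_nth)
  have rank: "card {s\<in>S. L ! j \<le> s} = Suc j" if "j < card S" for j
  proof -
    have "{s\<in>S. L ! j \<le> s} = (\<lambda>i. L ! i) ` {..j}"
    proof
      show "{s\<in>S. L ! j \<le> s} \<subseteq> (\<lambda>i. L ! i) ` {..j}"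
      proof
        fix s assume s: "s \<in> {s\<in>S. L ! j \<le> s}"
        then obtain i where i: "i < length L" "s = L ! i" using setL by (auto simp: in_set_conv_nth)
        have "i \<le> j"
        proof (rule ccontr)
          assume "\<not> i \<le> j"
          then have "L ! i < L ! j" using lt i by auto
          then show False using s i by auto
        qed
        then show "s \<in> (\<lambda>i. L ! i) ` {..j}" using i by auto
      qed
      show "(\<lambda>i. L ! i) ` {..j} \<subseteq> {s\<in>S. L ! j \<le> s}"
      proof
        fix s assume "s \<in> (\<lambda>i. L ! i) ` {..j}"
        then obtain i where i: "i \<le> j" "s = L ! i" by auto
        have "L ! j \<le> L ! i" using lt[of i j] i that len by (cases "i = j") auto
        moreover have "L ! i \<in> S" using i that len setL by auto
        ultimately show "s \<in> {s\<in>S. L ! j \<le> s}" using i by auto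
      qed
    qed
    moreover have "inj_on (\<lambda>i. L ! i) {..j}"
      using dist that len by (auto simp: inj_on_def nth_eq_iff_index_eq)
    ultimately show ?thesis by (simp add: card_image)
  qed
  have "Pw x S = (\<Prod>j<card S. brk x (L ! j - 1) (card {s\<in>S. L ! j \<le> s}))"
    unfolding Pw_def using prod.reindex_bij_betw[OF bij, symmetric] by simp
  also have "\<dots> = (\<Prod>j<card S. brk x (L ! j - 1) (j + 1))"
    using rank by (intro prod.cong) auto
  finally show ?thesis unfolding wt_set_def Let_def L_def by simp
qed

lemma wt_set_sum:
  assumes "1 \<le> n"
  shows "(\<Sum>S\<in>{S. S \<subseteq> {2..n} \<and> card S = k}. wt_set x S)
       = (\<Prod>j<k. brk x (1 + j) (n - 1 - j)) / qfact x k"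
proof -
  have fin: "\<And>S. S \<in> {S. S \<subseteq> {2..n} \<and> card S = k} \<Longrightarrow> finite S"
    using finite_subset by auto
  have "(\<Sum>S\<in>{S. S \<subseteq> {2..n} \<and> card S = k}. wt_set x S)
      = (\<Sum>S\<in>{S. S \<subseteq> {2..n} \<and> card S = k}. Pw x S / qfact x k)"
    using fin wt_set_Pw by (intro sum.cong) auto
  also have "\<dots> = (\<Sum>S\<in>{S. S \<subseteq> {Suc 1..1 + (n - 1)} \<and> card S = k}. Pw x S) / qfact x k"
    using assms by (simp add: sum_divide_distrib numeral_2_eq_2)
  also have "\<dots> = (\<Prod>j<k. brk x (1 + j) (n - 1 - j)) / qfact x k"
    using subset_sum[where a=1 and N="n - 1" and k=k and x=x] by simp
  finally show ?thesis .
qed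



definition Rl :: "(nat \<times> nat) set \<Rightarrow> nat \<Rightarrow> nat \<Rightarrow> bool" where
  "Rl r u w \<longleftrightarrow> (w, u) \<notin> r \<or> w = u"

lemma lin_ext_alt: "lin_ext n r = {w. distinct w \<and> set w = {1..n} \<and> sorted_wrt (Rl r) w}"
proof -
  have "(\<forall>p q. p < length w \<and> q < length w \<and> (w ! p, w ! q) \<in> r \<and> w ! p \<noteq> w ! q \<longrightarrow> p < q)
        \<longleftrightarrow> sorted_wrt (Rl r) w" for w
  proof
    assume H: "\<forall>p q. p < length w \<and> q < length w \<and> (w ! p, w ! q) \<in> r \<and> w ! p \<noteq> w ! q \<longrightarrow> p < q"
    show "sorted_wrt (Rl r) w" unfolding sorted_wrt_iff_nth_less Rl_def
      using H by (meson order.strict_trans not_less_iff_gr_or_eq)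
  next
    assume "sorted_wrt (Rl r) w"
    then have H: "\<And>i j. i < j \<Longrightarrow> j < length w \<Longrightarrow> Rl r (w ! i) (w ! j)"
      by (simp add: sorted_wrt_iff_nth_less)
    show "\<forall>p q. p < length w \<and> q < length w \<and> (w ! p, w ! q) \<in> r \<and> w ! p \<noteq> w ! q \<longrightarrow> p < q"
    proof (intro allI impI)
      fix p q assume a: "p < length w \<and> q < length w \<and> (w ! p, w ! q) \<in> r \<and> w ! p \<noteq> w ! q"
      show "p < q"
      proof (rule ccontr)
        assume "\<not> p < q"
        then have "q < p \<or> q = p" by auto
        then show False using H[of q p] a unfolding Rl_def by auto
      qed
    qed
  qed
  then show ?thesis unfolding lin_ext_def by auto
qed

fun mrg :: "nat set \<Rightarrow> nat \<Rightarrow> 'b list \<Rightarrow> 'b list \<Rightarrow> 'b list" where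
  "mrg S i [] ys = ys"
| "mrg S i (x # xs) [] = x # xs"
| "mrg S i (x # xs) (y # ys) =
     (if i \<in> S then x # mrg S (Suc i) xs (y # ys) else y # mrg S (Suc i) (x # xs) ys)"

lemma mrg_filter1:
  "\<forall>y\<in>set xs. P y \<Longrightarrow> \<forall>y\<in>set ys. \<not> P y \<Longrightarrow> filter P (mrg S i xs ys) = xs"
  by (induction S i xs ys rule: mrg.induct) auto

lemma mrg_filter2:
  "\<forall>y\<in>set xs. \<not> P y \<Longrightarrow> \<forall>y\<in>set ys. P y \<Longrightarrow> filter P (mrg S i xs ys) = ys"
  by (induction S i xs ys rule: mrg.induct) auto

lemma set_mrg: "set (mrg S i xs ys) = set xs \<union> set ys"
  by (induction S i xs ys rule: mrg.induct) auto

lemma length_mrg: "length (mrg S i xs ys) = length xs + length ys"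
  by (induction S i xs ys rule: mrg.induct) auto

lemma distinct_mrg:
  "distinct xs \<Longrightarrow> distinct ys \<Longrightarrow> set xs \<inter> set ys = {} \<Longrightarrow> distinct (mrg S i xs ys)"
  by (induction S i xs ys rule: mrg.induct) (auto simp: set_mrg)

lemma sorted_mrg:
  "sorted_wrt R xs \<Longrightarrow> sorted_wrt R ys \<Longrightarrow> (\<forall>a\<in>set xs. \<forall>b\<in>set ys. R a b \<and> R b a)
   \<Longrightarrow> sorted_wrt R (mrg S i xs ys)"
  by (induction S i xs ys rule: mrg.induct) (auto simp: set_mrg)

lemma pos_Cons:
  "{j + i |j. j < length (z # m) \<and> P ((z # m) ! j)}
   = (if P z then {i} else {}) \<union> {j + Suc i |j. j < length m \<and> P (m ! j)}"
proof -
  have "{j + i |j. j < length (z # m) \<and> P ((z # m) ! j)}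
     = {0 + i |j. j = 0 \<and> P z} \<union> {Suc j + i |j. j < length m \<and> P (m ! j)}"
    apply (rule set_eqI)
    apply (simp only: mem_Collect_eq Un_iff)
    apply (rule iffI)
     apply (elim exE conjE)
    subgoal for y j by (cases j) auto
    apply (elim disjE exE conjE)
    subgoal for y j by (rule exI[of _ 0]) auto
    subgoal for y j by (rule exI[of _ "Suc j"]) auto
    done
  then show ?thesis by auto
qed

lemma pos_mrg:
  assumes "\<forall>y\<in>set xs. P y" "\<forall>y\<in>set ys. \<not> P y"
    and "card (S \<inter> {i..}) = length xs" and "S \<subseteq> {..< i + length xs + length ys}"
  shows "{j + i |j. j < length (mrg S i xs ys) \<and> P (mrg S i xs ys ! j)} = S \<inter> {i..}"
  using assms
proof (induction S i xs ys rule: mrg.induct)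
  case (1 S i ys)
  have "finite S" using 1(4) finite_subset by blast
  then have "S \<inter> {i..} = {}" using 1(3) by simp
  moreover have "{j + i |j. j < length ys \<and> P (ys ! j)} = {}" using 1(2) by auto
  ultimately show ?case by simp
next
  case (2 S i x xs)
  have fin: "finite S" using 2(4) finite_subset by blast
  have sub: "S \<inter> {i..} \<subseteq> {i..< i + length (x # xs)}" using 2(4) by auto
  have "card (S \<inter> {i..}) = card {i..< i + length (x # xs)}" using 2(3) by simp
  then have eq: "S \<inter> {i..} = {i..< i + length (x # xs)}"
    using card_subset_eq[OF _ sub] by simp
  have "{j + i |j. j < length (x # xs) \<and> P ((x # xs) ! j)} = {i..< i + length (x # xs)}"
  proof (rule set_eqI)
    fix y
    show "y \<in> {j + i |j. j < length (x # xs) \<and> P ((x # xs) ! j)} \<longleftrightarrow> y \<in> {i..< i + length (x # xs)}"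
    proof
      assume "y \<in> {i..< i + length (x # xs)}"
      then have "y - i < length (x # xs)" "y = (y - i) + i" by auto
      moreover have "P ((x # xs) ! (y - i))" using 2(1) nth_mem[OF \<open>y - i < length (x # xs)\<close>] by blast
      ultimately show "y \<in> {j + i |j. j < length (x # xs) \<and> P ((x # xs) ! j)}" by blast
    qed auto
  qed
  then show ?case using eq by simp
next
  case (3 S i x xs y ys)
  show ?case
  proof (cases "i \<in> S")
    case True
    have e: "S \<inter> {Suc i..} = S \<inter> {i..} - {i}" by auto
    have fin: "finite S" using 3(6) finite_subset by blast
    have c: "card (S \<inter> {Suc i..}) = length xs" unfolding e using 3(5) True fin by simp
    have IH: "{j + Suc i |j. j < length (mrg S (Suc i) xs (y # ys)) \<and> P (mrg S (Suc i) xs (y # ys) ! j)}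
        = S \<inter> {Suc i..}"
      using 3(1)[OF True] 3(3,4,6) c by auto
    have m: "mrg S i (x # xs) (y # ys) = x # mrg S (Suc i) xs (y # ys)" using True by simp
    have "P x" using 3(3) by simp
    show ?thesis unfolding m pos_Cons IH using True \<open>P x\<close> e by auto
  next
    case False
    have e: "S \<inter> {Suc i..} = S \<inter> {i..}" using False by (auto simp: Suc_le_eq order_le_less)
    have IH: "{j + Suc i |j. j < length (mrg S (Suc i) (x # xs) ys) \<and> P (mrg S (Suc i) (x # xs) ys ! j)}
        = S \<inter> {Suc i..}"
      using 3(2)[OF False] 3(3,4,5,6) e by auto
    have m: "mrg S i (x # xs) (y # ys) = y # mrg S (Suc i) (x # xs) ys" using False by simp
    have "\<not> P y" using 3(4) by simp
    show ?thesis unfolding m pos_Cons IH using \<open>\<not> P y\<close> e by auto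
  qed
qed

lemma list_eq_filters:
  assumes "length xs = length ys" "\<forall>j<length xs. P (xs ! j) = P (ys ! j)"
    "filter P xs = filter P ys" "filter (\<lambda>u. \<not> P u) xs = filter (\<lambda>u. \<not> P u) ys"
  shows "xs = ys"
  using assms
proof (induction xs arbitrary: ys)
  case Nil then show ?case by simp
next
  case (Cons a xs)
  then obtain b ys' where ys: "ys = b # ys'" by (cases ys) auto
  have "P a = P b" using Cons(3)[rule_format, of 0] ys by simp
  then have "a = b" using Cons(4,5) ys by (cases "P a") auto
  moreover have "xs = ys'"
  proof (rule Cons(1))
    show "length xs = length ys'" using Cons(2) ys by simp
    show "\<forall>j<length xs. P (xs ! j) = P (ys' ! j)" using Cons(3) ys by force
    show "filter P xs = filter P ys'" using Cons(4) ys \<open>P a = P b\<close> \<open>a = b\<close> by (cases "P a") auto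
    show "filter (\<lambda>u. \<not> P u) xs = filter (\<lambda>u. \<not> P u) ys'"
      using Cons(5) ys \<open>P a = P b\<close> \<open>a = b\<close> by (cases "P a") auto
  qed
  ultimately show ?case using ys by simp
qed



definition root :: "nat \<Rightarrow> (nat \<times> nat) set \<Rightarrow> nat \<Rightarrow> bool" where
  "root n r v \<longleftrightarrow> v \<in> {1..n} \<and> (\<forall>u. (u, v) \<in> r \<longrightarrow> u = v)"

definition dn :: "(nat \<times> nat) set \<Rightarrow> nat \<Rightarrow> nat set" where
  "dn r q = {u. (u, q) \<in> r}"

lemma po_sub: assumes "partial_order_on {1..n} r" "(p, q) \<in> r" shows "p \<in> {1..n} \<and> q \<in> {1..n}"
proof -
  have "(p, q) \<in> {1..n} \<times> {1..n}" by (rule subsetD[OF partial_order_onD(4)[OF assms(1)] assms(2)])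
  then show ?thesis by (simp only: mem_Sigma_iff)
qed
lemma po_refl: assumes "partial_order_on {1..n} r" "p \<in> {1..n}" shows "(p, p) \<in> r"
  by (rule refl_onD[OF partial_order_onD(1)[OF assms(1)] assms(2)])
lemma po_trans: assumes "partial_order_on {1..n} r" "(p, q) \<in> r" "(q, s) \<in> r" shows "(p, s) \<in> r"
  by (rule transD[OF partial_order_onD(2)[OF assms(1)] assms(2,3)])
lemma po_antisym: assumes "partial_order_on {1..n} r" "(p, q) \<in> r" "(q, p) \<in> r" shows "p = q"
  by (rule antisymD[OF partial_order_onD(3)[OF assms(1)] assms(2,3)])

lemma fin_up: assumes po: "partial_order_on {1..n} r" shows "finite (up_set r i)"
proof (rule finite_subset[of _ "{1..n}"])
  show "up_set r i \<subseteq> {1..n}" unfolding up_set_def using po_sub[OF po] by blast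
qed simp
lemma fin_dn: assumes po: "partial_order_on {1..n} r" shows "finite (dn r i)"
proof (rule finite_subset[of _ "{1..n}"])
  show "dn r i \<subseteq> {1..n}" unfolding dn_def using po_sub[OF po] by blast
qed simp

lemma up_interval:
  assumes po: "partial_order_on {1..n} r" and rl: "recursively_labelled n r" and i: "i \<in> {1..n}"
  shows "\<exists>a b. up_set r i = {a..b} \<and> 1 \<le> a \<and> a \<le> i \<and> i \<le> b"
proof -
  have "\<exists>a b. up_set r i = {a..b}" using rl i unfolding recursively_labelled_def by (rule bspec)
  then obtain a b where ab: "up_set r i = {a..b}" by (elim exE) (rule that)
  have "i \<in> up_set r i" using po_refl[OF po i] by (simp add: up_set_def)
  then have "a \<le> i" "i \<le> b" using ab by auto
  moreover have "a \<in> up_set r i" using ab \<open>a \<le> i\<close> \<open>i \<le> b\<close> by auto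
  then have "1 \<le> a" using po_sub[OF po] by (auto simp: up_set_def)
  ultimately show ?thesis using ab by (intro exI[of _ a] exI[of _ b]) simp
qed

lemma D_sum:
  assumes po: "partial_order_on {1..n} r" and rl: "recursively_labelled n r" and i: "i \<in> {1..n}"
  shows "brk x (Min (up_set r i) - 1) (card (up_set r i)) = (\<Sum>j\<in>up_set r i. x j)"
proof -
  obtain a b where ab: "up_set r i = {a..b}" "1 \<le> a" "a \<le> i" "i \<le> b"
    using up_interval[OF po rl i] by (elim exE conjE) (rule that, assumption+)
  have m: "Min (up_set r i) = a" unfolding ab(1) using ab by (intro Min_eqI) auto
  have c: "card (up_set r i) = Suc b - a" unfolding ab(1) by simp
  have "brk x (Min (up_set r i) - 1) (card (up_set r i)) = brk x (a - 1) (Suc b - a)"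
    by (simp only: m c)
  also have "\<dots> = (\<Sum>j\<in>{a..b}. x j)" by (rule brk_interval[OF ab(2)])
  also have "\<dots> = (\<Sum>j\<in>up_set r i. x j)" by (simp only: ab(1))
  finally show ?thesis .
qed

lemma cross:
  assumes po: "partial_order_on {1..n} r" and rl: "recursively_labelled n r"
    and v: "root n r v" and pv: "p < v" and vq: "v < q"
  shows "(p, q) \<notin> r \<and> (q, p) \<notin> r"
proof (intro conjI notI)
  assume pq: "(p, q) \<in> r"
  then have "p \<in> {1..n}" using po_sub[OF po] by blast
  then obtain a b where ab: "up_set r p = {a..b}" "1 \<le> a" "a \<le> p" "p \<le> b"
    using up_interval[OF po rl \<open>p \<in> {1..n}\<close>] by (elim exE conjE) (rule that, assumption+)
  have "q \<in> up_set r p" using pq by (simp add: up_set_def)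
  then have "q \<in> {a..b}" using ab(1) by simp
  then have "v \<in> {a..b}" using ab(3) pv vq by simp
  then have "v \<in> up_set r p" using ab(1) by simp
  then have "(p, v) \<in> r" by (simp add: up_set_def)
  moreover have "p \<noteq> v" using pv by simp
  ultimately show False using v unfolding root_def by blast
next
  assume qp: "(q, p) \<in> r"
  then have "q \<in> {1..n}" using po_sub[OF po] by blast
  then obtain a b where ab: "up_set r q = {a..b}" "1 \<le> a" "a \<le> q" "q \<le> b"
    using up_interval[OF po rl \<open>q \<in> {1..n}\<close>] by (elim exE conjE) (rule that, assumption+)
  have "p \<in> up_set r q" using qp by (simp add: up_set_def)
  then have "p \<in> {a..b}" using ab(1) by simp
  then have "v \<in> {a..b}" using ab(4) pv vq by simp
  then have "v \<in> up_set r q" using ab(1) by simp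
  then have "(q, v) \<in> r" by (simp add: up_set_def)
  moreover have "q \<noteq> v" using vq by simp
  ultimately show False using v unfolding root_def by blast
qed

lemma up_lt:
  assumes po: "partial_order_on {1..n} r" and rl: "recursively_labelled n r"
    and v: "root n r v" and iv: "i < v" and ij: "(i, j) \<in> r"
  shows "j < v"
proof -
  have "j \<noteq> v"
  proof
    assume "j = v"
    then have "(i, v) \<in> r" using ij by simp
    then have "i = v" using v unfolding root_def by blast
    then show False using iv by simp
  qed
  moreover have "\<not> v < j"
  proof
    assume "v < j"
    then show False using cross[OF po rl v iv \<open>v < j\<close>] ij by blast
  qed
  ultimately show ?thesis by auto
qed

lemma up_gt:
  assumes po: "partial_order_on {1..n} r" and rl: "recursively_labelled n r"
    and v: "root n r v" and iv: "v < i" and ij: "(i, j) \<in> r"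
  shows "v < j"
proof -
  have "j \<noteq> v"
  proof
    assume "j = v"
    then have "(i, v) \<in> r" using ij by simp
    then have "i = v" using v unfolding root_def by blast
    then show False using iv by simp
  qed
  moreover have "\<not> j < v"
  proof
    assume "j < v"
    then show False using cross[OF po rl v \<open>j < v\<close> iv] ij by blast
  qed
  ultimately show ?thesis by auto
qed

lemma root_exists:
  assumes po: "partial_order_on {1..n} r" and q: "q \<in> {1..n}"
  shows "\<exists>v. root n r v \<and> (v, q) \<in> r"
proof -
  have "(q, q) \<in> r" using po_refl[OF po q] .
  then have "\<exists>v. (v, q) \<in> r \<and> (\<forall>w. (w, q) \<in> r \<longrightarrow> card (dn r v) \<le> card (dn r w))"
    by (rule ex_has_least_nat)
  then obtain v where v: "(v, q) \<in> r" and vmin: "\<forall>w. (w, q) \<in> r \<longrightarrow> card (dn r v) \<le> card (dn r w)"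
    by blast
  have "root n r v"
    unfolding root_def
  proof (intro conjI allI impI)
    show "v \<in> {1..n}" using po_sub[OF po v] by blast
    fix w assume wv: "(w, v) \<in> r"
    show "w = v"
    proof (rule ccontr)
      assume "w \<noteq> v"
      have "dn r w \<subset> dn r v"
      proof
        show "dn r w \<subseteq> dn r v" using po_trans[OF po _ wv] by (auto simp: dn_def)
        have "v \<in> dn r v" using po_refl[OF po \<open>v \<in> {1..n}\<close>] by (simp add: dn_def)
        moreover have "v \<notin> dn r w" using po_antisym[OF po wv] \<open>w \<noteq> v\<close> by (auto simp: dn_def)
        ultimately show "dn r w \<noteq> dn r v" by blast
      qed
      then have "card (dn r w) < card (dn r v)" using psubset_card_mono fin_dn[OF po] by blast
      moreover have "(w, q) \<in> r" using po_trans[OF po wv v] .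
      moreover have "card (dn r v) \<le> card (dn r w)" using vmin \<open>(w, q) \<in> r\<close> by blast
      ultimately show False by simp
    qed
  qed
  then show ?thesis using v by blast
qed

lemma cover_above:
  assumes po: "partial_order_on {1..n} r" and uq: "(u, q) \<in> r" "u \<noteq> q"
  shows "\<exists>c. (u, c) \<in> r \<and> covers r q c"
proof -
  let ?P = "\<lambda>c. (u, c) \<in> r \<and> (c, q) \<in> r \<and> c \<noteq> q"
  have "u \<in> {1..n}" using po_sub[OF po uq(1)] by (rule conjunct1)
  then have "(u, u) \<in> r" by (rule po_refl[OF po])
  then have "?P u" using uq by simp
  then have "\<exists>c. ?P c \<and> (\<forall>k. ?P k \<longrightarrow> card (up_set r c) \<le> card (up_set r k))"
    by (rule ex_has_least_nat)
  then obtain c where c: "?P c" and cmin: "\<And>k. ?P k \<Longrightarrow> card (up_set r c) \<le> card (up_set r k)"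
    by blast
  have "covers r q c" unfolding covers_def
  proof (intro conjI)
    show "(c, q) \<in> r" using c by simp
    show "c \<noteq> q" using c by simp
    show "\<not> (\<exists>k. k \<noteq> c \<and> k \<noteq> q \<and> (c, k) \<in> r \<and> (k, q) \<in> r)"
    proof
    assume "\<exists>k. k \<noteq> c \<and> k \<noteq> q \<and> (c, k) \<in> r \<and> (k, q) \<in> r"
    then obtain k where k: "k \<noteq> c" "k \<noteq> q" "(c, k) \<in> r" "(k, q) \<in> r" by blast
    have "?P k" using k c po_trans[OF po, of u c k] by blast
    have "up_set r k \<subset> up_set r c"
    proof
      show "up_set r k \<subseteq> up_set r c" using po_trans[OF po k(3)] by (auto simp: up_set_def)
      have "c \<in> {1..n}" using po_sub[OF po k(3)] by (rule conjunct1)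
      then have "c \<in> up_set r c" using po_refl[OF po] by (simp add: up_set_def)
      moreover have "c \<notin> up_set r k" using po_antisym[OF po k(3)] k(1) by (auto simp: up_set_def)
      ultimately show "up_set r k \<noteq> up_set r c" by blast
    qed
    then have "card (up_set r k) < card (up_set r c)" using psubset_card_mono fin_up[OF po] by blast
    then show False using cmin[OF \<open>?P k\<close>] by simp
    qed
  qed
  then show ?thesis using c by blast
qed

lemma root_unique:
  assumes fp: "forest_poset n r"
  shows "root n r v1 \<Longrightarrow> root n r v2 \<Longrightarrow> (v1, q) \<in> r \<Longrightarrow> (v2, q) \<in> r \<Longrightarrow> v1 = v2"
proof (induction "card (dn r q)" arbitrary: q v1 v2 rule: less_induct)
  case less
  have po: "partial_order_on {1..n} r" using fp unfolding forest_poset_def by blast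
  have uniq: "\<And>j i i'. covers r j i \<Longrightarrow> covers r j i' \<Longrightarrow> i = i'"
    using fp unfolding forest_poset_def by blast
  show ?case
  proof (cases "v1 = q \<or> v2 = q")
    case True
    then show ?thesis
    proof
      assume "v1 = q"
      then have "(v2, v1) \<in> r" using less.prems(4) by simp
      then show ?thesis using less.prems(1) unfolding root_def by blast
    next
      assume "v2 = q"
      then have "(v1, v2) \<in> r" using less.prems(3) by simp
      then show ?thesis using less.prems(2) unfolding root_def by blast
    qed
  next
    case False
    obtain c1 where c1: "(v1, c1) \<in> r" "covers r q c1" using cover_above[OF po less.prems(3)] False by blast
    obtain c2 where c2: "(v2, c2) \<in> r" "covers r q c2" using cover_above[OF po less.prems(4)] False by blast
    have "c1 = c2" using uniq c1(2) c2(2) by blast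
    have cq: "(c1, q) \<in> r" "c1 \<noteq> q" using c1(2) unfolding covers_def by auto
    have "dn r c1 \<subset> dn r q"
    proof
      show "dn r c1 \<subseteq> dn r q" using po_trans[OF po _ cq(1)] by (auto simp: dn_def)
      have "q \<in> {1..n}" using po_sub[OF po cq(1)] by blast
      then have "q \<in> dn r q" using po_refl[OF po] by (simp add: dn_def)
      moreover have "q \<notin> dn r c1" using po_antisym[OF po cq(1)] cq(2) by (auto simp: dn_def)
      ultimately show "dn r c1 \<noteq> dn r q" by blast
    qed
    then have "card (dn r c1) < card (dn r q)" using psubset_card_mono fin_dn[OF po] by blast
    then show ?thesis using less.hyps[of c1 v1 v2] less.prems c1(1) c2(1) \<open>c1 = c2\<close> by blast
  qed
qed

lemma roots_sum:
  assumes fp: "forest_poset n r" and rl: "recursively_labelled n r"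
  shows "(\<Sum>v\<in>{v. root n r v}. brk x (Min (up_set r v) - 1) (card (up_set r v))) = brk x 0 n"
proof -
  have po: "partial_order_on {1..n} r" using fp unfolding forest_poset_def by blast
  have finR: "finite {v. root n r v}" by (rule finite_subset[of _ "{1..n}"]) (auto simp: root_def)
  have "(\<Sum>v\<in>{v. root n r v}. brk x (Min (up_set r v) - 1) (card (up_set r v)))
      = (\<Sum>v\<in>{v. root n r v}. (\<Sum>j\<in>up_set r v. x j))"
    using D_sum[OF po rl] by (intro sum.cong) (auto simp: root_def)
  also have "\<dots> = (\<Sum>j\<in>(\<Union>v\<in>{v. root n r v}. up_set r v). x j)"
  proof (rule sum.UNION_disjoint[symmetric])
    show "finite {v. root n r v}" by (rule finR)
    show "\<forall>v\<in>{v. root n r v}. finite (up_set r v)" using fin_up[OF po] by blast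
    show "\<forall>v\<in>{v. root n r v}. \<forall>w\<in>{v. root n r v}. v \<noteq> w \<longrightarrow> up_set r v \<inter> up_set r w = {}"
    proof (intro ballI impI)
      fix v w assume vw: "v \<in> {v. root n r v}" "w \<in> {v. root n r v}" "v \<noteq> w"
      show "up_set r v \<inter> up_set r w = {}"
      proof (rule ccontr)
        assume "up_set r v \<inter> up_set r w \<noteq> {}"
        then obtain q where "(v, q) \<in> r" "(w, q) \<in> r" by (auto simp: up_set_def)
        then show False using root_unique[OF fp, of v w q] vw by blast
      qed
    qed
  qed
  also have "(\<Union>v\<in>{v. root n r v}. up_set r v) = {1..n}"
  proof
    show "(\<Union>v\<in>{v. root n r v}. up_set r v) \<subseteq> {1..n}" using po_sub[OF po] by (auto simp: up_set_def)
    show "{1..n} \<subseteq> (\<Union>v\<in>{v. root n r v}. up_set r v)"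
      using root_exists[OF po] by (auto simp: up_set_def)
  qed
  also have "{1..n} = {0<..0 + n}" by auto
  finally show ?thesis by (simp add: brk_def)
qed



definition ra :: "nat \<Rightarrow> (nat \<times> nat) set \<Rightarrow> (nat \<times> nat) set" where
  "ra v r = {(p, q). (p, q) \<in> r \<and> p < v \<and> q < v}"

definition rb :: "nat \<Rightarrow> (nat \<times> nat) set \<Rightarrow> (nat \<times> nat) set" where
  "rb v r = {(p, q). 0 < p \<and> 0 < q \<and> (p + v, q + v) \<in> r}"

lemma ra_po:
  assumes po: "partial_order_on {1..n} r" and kn: "k \<le> n"
  shows "partial_order_on {1..k} (ra (Suc k) r)"
  unfolding partial_order_on_def preorder_on_def
proof (intro conjI)
  show "ra (Suc k) r \<subseteq> {1..k} \<times> {1..k}"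
  proof
    fix z assume z: "z \<in> ra (Suc k) r"
    then obtain p q where pq: "z = (p, q)" "(p, q) \<in> r" "p < Suc k" "q < Suc k"
      unfolding ra_def by blast
    have "p \<in> {1..n} \<and> q \<in> {1..n}" by (rule po_sub[OF po pq(2)])
    then show "z \<in> {1..k} \<times> {1..k}" using pq by auto
  qed
  show "refl_on {1..k} (ra (Suc k) r)"
  proof (rule refl_onI)
    fix p assume p: "p \<in> {1..k}"
    then have "p \<in> {1..n}" using kn by auto
    then have "(p, p) \<in> r" by (rule po_refl[OF po])
    then show "(p, p) \<in> ra (Suc k) r" using p unfolding ra_def by auto
  qed
  show "trans (ra (Suc k) r)"
  proof (rule transI)
    fix p q s assume "(p, q) \<in> ra (Suc k) r" "(q, s) \<in> ra (Suc k) r"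
    then show "(p, s) \<in> ra (Suc k) r" unfolding ra_def using po_trans[OF po] by auto
  qed
  show "antisym (ra (Suc k) r)"
  proof (rule antisymI)
    fix p q assume "(p, q) \<in> ra (Suc k) r" "(q, p) \<in> ra (Suc k) r"
    then show "p = q" unfolding ra_def using po_antisym[OF po] by auto
  qed
qed

lemma rb_po:
  assumes po: "partial_order_on {1..n} r"
  shows "partial_order_on {1..n - v} (rb v r)"
  unfolding partial_order_on_def preorder_on_def
proof (intro conjI)
  show "rb v r \<subseteq> {1..n - v} \<times> {1..n - v}"
  proof
    fix z assume z: "z \<in> rb v r"
    then obtain p q where pq: "z = (p, q)" "(p + v, q + v) \<in> r" "0 < p" "0 < q"
      unfolding rb_def by blast
    have "p + v \<in> {1..n} \<and> q + v \<in> {1..n}" by (rule po_sub[OF po pq(2)])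
    then show "z \<in> {1..n - v} \<times> {1..n - v}" using pq by auto
  qed
  show "refl_on {1..n - v} (rb v r)"
  proof (rule refl_onI)
    fix p assume p: "p \<in> {1..n - v}"
    then have "p + v \<in> {1..n}" by auto
    then have "(p + v, p + v) \<in> r" by (rule po_refl[OF po])
    then show "(p, p) \<in> rb v r" using p unfolding rb_def by auto
  qed
  show "trans (rb v r)"
  proof (rule transI)
    fix p q s assume "(p, q) \<in> rb v r" "(q, s) \<in> rb v r"
    then show "(p, s) \<in> rb v r" unfolding rb_def using po_trans[OF po] by auto
  qed
  show "antisym (rb v r)"
  proof (rule antisymI)
    fix p q assume "(p, q) \<in> rb v r" "(q, p) \<in> rb v r"
    then have "(p + v, q + v) \<in> r" "(q + v, p + v) \<in> r" unfolding rb_def by auto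
    then have "p + v = q + v" by (rule po_antisym[OF po])
    then show "p = q" by simp
  qed
qed

context
  fixes n r k
  assumes fp: "forest_poset n r" and rl: "recursively_labelled n r" and v: "root n r (Suc k)"
begin

lemma po: "partial_order_on {1..n} r" using fp unfolding forest_poset_def by blast
lemma kn: "k < n" using v unfolding root_def by auto

lemma up_ra: "i < Suc k \<Longrightarrow> up_set (ra (Suc k) r) i = up_set r i"
  unfolding up_set_def ra_def using up_lt[OF po rl v] by auto

lemma up_rb: "0 < i \<Longrightarrow> (\<lambda>j. j + Suc k) ` up_set (rb (Suc k) r) i = up_set r (i + Suc k)"
proof
  assume i: "0 < i"
  show "(\<lambda>j. j + Suc k) ` up_set (rb (Suc k) r) i \<subseteq> up_set r (i + Suc k)"
    unfolding up_set_def rb_def by auto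
  show "up_set r (i + Suc k) \<subseteq> (\<lambda>j. j + Suc k) ` up_set (rb (Suc k) r) i"
  proof
    fix j assume j: "j \<in> up_set r (i + Suc k)"
    then have ij: "(i + Suc k, j) \<in> r" by (simp add: up_set_def)
    have "Suc k < j" using up_gt[OF po rl v _ ij] i by simp
    then have "j = (j - Suc k) + Suc k" "0 < j - Suc k" by auto
    then show "j \<in> (\<lambda>j. j + Suc k) ` up_set (rb (Suc k) r) i"
      using ij i unfolding up_set_def rb_def by (intro image_eqI[of _ _ "j - Suc k"]) auto
  qed
qed

lemma ra_forest: "forest_poset k (ra (Suc k) r)"
  unfolding forest_poset_def
proof (intro conjI allI impI)
  show "partial_order_on {1..k} (ra (Suc k) r)" using ra_po[OF po] kn by simp
  fix j i i' assume c: "covers (ra (Suc k) r) j i \<and> covers (ra (Suc k) r) j i'"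
  have cov: "covers r j i0" if ci: "covers (ra (Suc k) r) j i0" for i0
  proof -
    have h: "(i0, j) \<in> r" "i0 < Suc k" "j < Suc k" "i0 \<noteq> j" using ci unfolding covers_def ra_def by auto
    have nk: "\<not> (\<exists>m. m \<noteq> i0 \<and> m \<noteq> j \<and> (i0, m) \<in> ra (Suc k) r \<and> (m, j) \<in> ra (Suc k) r)"
      using ci unfolding covers_def by blast
    show ?thesis unfolding covers_def
    proof (intro conjI)
      show "(i0, j) \<in> r" "i0 \<noteq> j" using h by auto
    next
      show "\<not> (\<exists>m. m \<noteq> i0 \<and> m \<noteq> j \<and> (i0, m) \<in> r \<and> (m, j) \<in> r)"
      proof
      assume "\<exists>m. m \<noteq> i0 \<and> m \<noteq> j \<and> (i0, m) \<in> r \<and> (m, j) \<in> r"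
      then obtain m where m: "m \<noteq> i0" "m \<noteq> j" "(i0, m) \<in> r" "(m, j) \<in> r" by blast
      have "m < Suc k" using up_lt[OF po rl v h(2) m(3)] .
      then show False using nk m h unfolding ra_def by blast
      qed
    qed
  qed
  have "\<And>j i i'. covers r j i \<and> covers r j i' \<longrightarrow> i = i'" using fp unfolding forest_poset_def by blast
  then show "i = i'" using cov c by blast
qed

lemma rb_forest: "forest_poset (n - Suc k) (rb (Suc k) r)"
  unfolding forest_poset_def
proof (intro conjI allI impI)
  show "partial_order_on {1..n - Suc k} (rb (Suc k) r)" using rb_po[OF po] by simp
  fix j i i' assume c: "covers (rb (Suc k) r) j i \<and> covers (rb (Suc k) r) j i'"
  have cov: "covers r (j + Suc k) (i0 + Suc k)" "0 < i0"
    if ci: "covers (rb (Suc k) r) j i0" for i0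
  proof -
    have h: "(i0 + Suc k, j + Suc k) \<in> r" "0 < i0" "0 < j" "i0 \<noteq> j"
      using ci unfolding covers_def rb_def by auto
    have nk: "\<not> (\<exists>m. m \<noteq> i0 \<and> m \<noteq> j \<and> (i0, m) \<in> rb (Suc k) r \<and> (m, j) \<in> rb (Suc k) r)"
      using ci unfolding covers_def by blast
    show "0 < i0" using h by simp
    show "covers r (j + Suc k) (i0 + Suc k)" unfolding covers_def
    proof (intro conjI)
      show "(i0 + Suc k, j + Suc k) \<in> r" "i0 + Suc k \<noteq> j + Suc k" using h by auto
    next
      show "\<not> (\<exists>m. m \<noteq> i0 + Suc k \<and> m \<noteq> j + Suc k \<and> (i0 + Suc k, m) \<in> r \<and> (m, j + Suc k) \<in> r)"
      proof
      assume "\<exists>m. m \<noteq> i0 + Suc k \<and> m \<noteq> j + Suc k \<and> (i0 + Suc k, m) \<in> r \<and> (m, j + Suc k) \<in> r"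
      then obtain m where m: "m \<noteq> i0 + Suc k" "m \<noteq> j + Suc k" "(i0 + Suc k, m) \<in> r" "(m, j + Suc k) \<in> r"
        by blast
      have "Suc k < i0 + Suc k" using h(2) by simp
      then have "Suc k < m" using up_gt[OF po rl v _ m(3)] by blast
      then have "m = (m - Suc k) + Suc k" "0 < m - Suc k" by auto
      then have "(i0, m - Suc k) \<in> rb (Suc k) r" "(m - Suc k, j) \<in> rb (Suc k) r"
        using m h unfolding rb_def by auto
      moreover have "m - Suc k \<noteq> i0" "m - Suc k \<noteq> j" using m \<open>Suc k < m\<close> by auto
      ultimately show False using nk by blast
      qed
    qed
  qed
  have "\<And>j i i'. covers r j i \<and> covers r j i' \<longrightarrow> i = i'" using fp unfolding forest_poset_def by blast
  then have "i + Suc k = i' + Suc k" using cov c by blast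
  then show "i = i'" by simp
qed

lemma ra_reclab: "recursively_labelled k (ra (Suc k) r)"
  unfolding recursively_labelled_def
proof
  fix i assume i: "i \<in> {1..k}"
  then have "i \<in> {1..n}" using kn by auto
  then have "\<exists>a b. up_set r i = {a..b}" using rl unfolding recursively_labelled_def by (rule bspec[rotated])
  moreover have "up_set (ra (Suc k) r) i = up_set r i" using i by (intro up_ra) auto
  ultimately show "\<exists>a b. up_set (ra (Suc k) r) i = {a..b}" by simp
qed

lemma rb_reclab: "recursively_labelled (n - Suc k) (rb (Suc k) r)"
  unfolding recursively_labelled_def
proof
  fix i assume i: "i \<in> {1..n - Suc k}"
  then have "i + Suc k \<in> {1..n}" by auto
  then obtain a b where ab: "up_set r (i + Suc k) = {a..b}" "1 \<le> a" "a \<le> i + Suc k" "i + Suc k \<le> b"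
    using up_interval[OF po rl \<open>i + Suc k \<in> {1..n}\<close>] by (elim exE conjE) (rule that, assumption+)
  have "a \<in> up_set r (i + Suc k)" using ab by simp
  then have "(i + Suc k, a) \<in> r" by (simp add: up_set_def)
  moreover have "Suc k < i + Suc k" using i by simp
  ultimately have av: "Suc k < a" using up_gt[OF po rl v] by blast
  have "up_set (rb (Suc k) r) i = {a - Suc k..b - Suc k}"
  proof (rule set_eqI)
    fix j
    have "j \<in> up_set (rb (Suc k) r) i \<longleftrightarrow> 0 < j \<and> (i + Suc k, j + Suc k) \<in> r"
      using i unfolding up_set_def rb_def by auto
    also have "\<dots> \<longleftrightarrow> 0 < j \<and> j + Suc k \<in> {a..b}" using ab(1) unfolding up_set_def by auto
    also have "\<dots> \<longleftrightarrow> j \<in> {a - Suc k..b - Suc k}" using av by auto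
    finally show "j \<in> up_set (rb (Suc k) r) i \<longleftrightarrow> j \<in> {a - Suc k..b - Suc k}" .
  qed
  then show "\<exists>a b. up_set (rb (Suc k) r) i = {a..b}" by blast
qed

end



definition Sv :: "nat \<Rightarrow> nat list \<Rightarrow> nat set" where
  "Sv v rest = {i + 2 | i. i < length rest \<and> rest ! i < v}"

definition Phi :: "nat \<Rightarrow> nat list \<Rightarrow> nat set \<times> nat list \<times> nat list" where
  "Phi v rest = (Sv v rest, filter (\<lambda>u. u < v) rest, map (\<lambda>u. u - v) (filter (\<lambda>u. v < u) rest))"

lemma card_Sv: "card (Sv v rest) = length (filter (\<lambda>u. u < v) rest)"
proof -
  have "Sv v rest = (\<lambda>i. i + 2) ` {i. i < length rest \<and> rest ! i < v}" unfolding Sv_def by auto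
  then have "card (Sv v rest) = card {i. i < length rest \<and> rest ! i < v}"
    by (simp add: card_image inj_on_def)
  then show ?thesis by (simp add: length_filter_conv_card)
qed

lemma Sv_iff: "j < length rest \<Longrightarrow> (j + 2 \<in> Sv v rest) = (rest ! j < v)"
  unfolding Sv_def by auto

context
  fixes n r k
  assumes fp: "forest_poset n r" and rl: "recursively_labelled n r" and v: "root n r (Suc k)"
begin

lemma rootv: "\<And>u. (u, Suc k) \<in> r \<Longrightarrow> u = Suc k" using v unfolding root_def by blast

lemma T_facts:
  assumes "Suc k # rest \<in> lin_ext n r"
  shows "distinct rest" "Suc k \<notin> set rest" "set rest = {1..n} - {Suc k}"
    "sorted_wrt (Rl r) rest" "length rest = n - 1"
proof -
  have h: "distinct (Suc k # rest)" "set (Suc k # rest) = {1..n}" "sorted_wrt (Rl r) (Suc k # rest)"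
    using assms unfolding lin_ext_alt by auto
  show "distinct rest" "Suc k \<notin> set rest" using h(1) by auto
  show "set rest = {1..n} - {Suc k}" using h(1,2) by auto
  show "sorted_wrt (Rl r) rest" using h(3) by simp
  have "length rest = card (set rest)" using h(1) by (simp add: distinct_card)
  also have "\<dots> = n - 1" using \<open>set rest = {1..n} - {Suc k}\<close> kn[OF fp rl v] by simp
  finally show "length rest = n - 1" .
qed

abbreviation "Tgt \<equiv> {S. S \<subseteq> {2..n} \<and> card S = k} \<times> (lin_ext k (ra (Suc k) r) \<times> lin_ext (n - Suc k) (rb (Suc k) r))"

lemma set_a: assumes s: "set rest = {1..n} - {Suc k}" shows "set (filter (\<lambda>u. u < Suc k) rest) = {1..k}"
proof (rule set_eqI)
  fix u
  have "u \<in> set (filter (\<lambda>u. u < Suc k) rest) \<longleftrightarrow> u \<in> {1..n} \<and> u \<noteq> Suc k \<and> u < Suc k"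
    using s by simp
  also have "\<dots> \<longleftrightarrow> u \<in> {1..k}" using kn[OF fp rl v] by auto
  finally show "u \<in> set (filter (\<lambda>u. u < Suc k) rest) \<longleftrightarrow> u \<in> {1..k}" .
qed

lemma set_b: "set rest = {1..n} - {Suc k} \<Longrightarrow>
   set (map (\<lambda>u. u - Suc k) (filter (\<lambda>u. Suc k < u) rest)) = {1..n - Suc k}"
proof -
  assume s: "set rest = {1..n} - {Suc k}"
  have "set (filter (\<lambda>u. Suc k < u) rest) = {Suc k<..n}"
  proof (rule set_eqI)
    fix u
    have "u \<in> set (filter (\<lambda>u. Suc k < u) rest) \<longleftrightarrow> u \<in> {1..n} \<and> u \<noteq> Suc k \<and> Suc k < u"
      using s by simp
    also have "\<dots> \<longleftrightarrow> u \<in> {Suc k<..n}" by auto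
    finally show "u \<in> set (filter (\<lambda>u. Suc k < u) rest) \<longleftrightarrow> u \<in> {Suc k<..n}" .
  qed
  then have "set (map (\<lambda>u. u - Suc k) (filter (\<lambda>u. Suc k < u) rest)) = (\<lambda>u. u - Suc k) ` {Suc k<..n}"
    by simp
  also have "\<dots> = {1..n - Suc k}"
  proof
    show "(\<lambda>u. u - Suc k) ` {Suc k<..n} \<subseteq> {1..n - Suc k}"
    proof
      fix j assume "j \<in> (\<lambda>u. u - Suc k) ` {Suc k<..n}"
      then obtain u where u: "u \<in> {Suc k<..n}" "j = u - Suc k" by (elim imageE)
      then have "Suc k < u" "u \<le> n" by auto
      then have "1 \<le> u - Suc k" "u - Suc k \<le> n - Suc k" by linarith+
      then show "j \<in> {1..n - Suc k}" using u(2) by simp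
    qed
    show "{1..n - Suc k} \<subseteq> (\<lambda>u. u - Suc k) ` {Suc k<..n}"
    proof
      fix j assume j: "j \<in> {1..n - Suc k}"
      have "j = (j + Suc k) - Suc k" by simp
      moreover have "j + Suc k \<in> {Suc k<..n}" using j by auto
      ultimately show "j \<in> (\<lambda>u. u - Suc k) ` {Suc k<..n}" by (rule image_eqI)
    qed
  qed
  finally show ?thesis .
qed

lemma phi_in:
  assumes T: "Suc k # rest \<in> lin_ext n r"
  shows "Phi (Suc k) rest \<in> Tgt"
proof -
  note F = T_facts[OF T]
  let ?a = "filter (\<lambda>u. u < Suc k) rest"
  let ?b = "map (\<lambda>u. u - Suc k) (filter (\<lambda>u. Suc k < u) rest)"
  have sa: "set ?a = {1..k}" using set_a[OF F(3)] .
  have da: "distinct ?a" using F(1) by simp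
  have la: "length ?a = k" using distinct_card[OF da] sa by simp
  have "Sv (Suc k) rest \<subseteq> {2..n}" unfolding Sv_def using F(5) kn[OF fp rl v] by auto
  moreover have "card (Sv (Suc k) rest) = k" using card_Sv la by simp
  moreover have "?a \<in> lin_ext k (ra (Suc k) r)"
    unfolding lin_ext_alt
  proof (intro CollectI conjI)
    show "distinct ?a" "set ?a = {1..k}" using da sa by auto
    have "sorted_wrt (Rl r) ?a" using F(4) by (rule sorted_wrt_filter)
    then show "sorted_wrt (Rl (ra (Suc k) r)) ?a"
      by (rule sorted_wrt_mono_rel[rotated]) (auto simp: Rl_def ra_def)
  qed
  moreover have "?b \<in> lin_ext (n - Suc k) (rb (Suc k) r)"
    unfolding lin_ext_alt
  proof (intro CollectI conjI)
    show "distinct ?b" using F(1) by (auto simp: distinct_map inj_on_def)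
    show "set ?b = {1..n - Suc k}" using set_b[OF F(3)] .
    have "sorted_wrt (Rl r) (filter (\<lambda>u. Suc k < u) rest)" using F(4) by (rule sorted_wrt_filter)
    then show "sorted_wrt (Rl (rb (Suc k) r)) ?b"
      unfolding sorted_wrt_map
    proof (rule sorted_wrt_mono_rel[rotated])
      fix u w assume uw: "u \<in> set (filter (\<lambda>u. Suc k < u) rest)" "w \<in> set (filter (\<lambda>u. Suc k < u) rest)"
        and R: "Rl r u w"
      show "Rl (rb (Suc k) r) (u - Suc k) (w - Suc k)"
      proof (cases "(w - Suc k, u - Suc k) \<in> rb (Suc k) r")
        case True
        then have "(w, u) \<in> r" using uw unfolding rb_def by auto
        then have "w = u" using R unfolding Rl_def by auto
        then show ?thesis unfolding Rl_def by simp
      qed (simp add: Rl_def)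
    qed
  qed
  ultimately show ?thesis unfolding Phi_def by simp
qed

lemma phi_inj: "inj_on (Phi (Suc k)) {rest. Suc k # rest \<in> lin_ext n r}"
proof (rule inj_onI)
  fix r1 r2 assume r1: "r1 \<in> {rest. Suc k # rest \<in> lin_ext n r}" and r2: "r2 \<in> {rest. Suc k # rest \<in> lin_ext n r}"
    and eq: "Phi (Suc k) r1 = Phi (Suc k) r2"
  note F1 = T_facts[OF r1[simplified]] and F2 = T_facts[OF r2[simplified]]
  have S: "Sv (Suc k) r1 = Sv (Suc k) r2" and A: "filter (\<lambda>u. u < Suc k) r1 = filter (\<lambda>u. u < Suc k) r2"
    and B: "map (\<lambda>u. u - Suc k) (filter (\<lambda>u. Suc k < u) r1) = map (\<lambda>u. u - Suc k) (filter (\<lambda>u. Suc k < u) r2)"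
    using eq unfolding Phi_def by auto
  have B': "filter (\<lambda>u. Suc k < u) r1 = filter (\<lambda>u. Suc k < u) r2"
    using B by (subst (asm) inj_on_map_eq_map) (auto simp: inj_on_def)
  have nf: "filter (\<lambda>u. \<not> u < Suc k) ri = filter (\<lambda>u. Suc k < u) ri" if "Suc k \<notin> set ri" for ri
  proof (rule filter_cong)
    fix u assume "u \<in> set ri"
    then have "u \<noteq> Suc k" using that by auto
    then show "(\<not> u < Suc k) = (Suc k < u)" by auto
  qed simp
  show "r1 = r2"
  proof (rule list_eq_filters[where P = "\<lambda>u. u < Suc k"])
    show "length r1 = length r2" using F1(5) F2(5) by simp
    show "\<forall>j<length r1. (r1 ! j < Suc k) = (r2 ! j < Suc k)"
      using Sv_iff[of _ r1 "Suc k"] Sv_iff[of _ r2 "Suc k"] S F1(5) F2(5) by auto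
    show "filter (\<lambda>u. u < Suc k) r1 = filter (\<lambda>u. u < Suc k) r2" by (rule A)
    show "filter (\<lambda>u. \<not> u < Suc k) r1 = filter (\<lambda>u. \<not> u < Suc k) r2"
      using nf[OF F1(2)] nf[OF F2(2)] B' by simp
  qed
qed

lemma phi_surj:
  assumes t: "t \<in> Tgt"
  shows "\<exists>rest. Suc k # rest \<in> lin_ext n r \<and> Phi (Suc k) rest = t"
proof -
  obtain S a b where tt: "t = (S, a, b)" by (cases t) auto
  have S: "S \<subseteq> {2..n}" "card S = k" using t tt by auto
  have a: "distinct a" "set a = {1..k}" "sorted_wrt (Rl (ra (Suc k) r)) a"
    using t tt unfolding lin_ext_alt by auto
  have b: "distinct b" "set b = {1..n - Suc k}" "sorted_wrt (Rl (rb (Suc k) r)) b"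
    using t tt unfolding lin_ext_alt by auto
  have knn: "k < n" using kn[OF fp rl v] .
  define b' where "b' = map (\<lambda>u. u + Suc k) b"
  have sb': "set b' = {Suc (Suc k)..n}"
  proof -
    have "set b' = (\<lambda>u. u + Suc k) ` {1..n - Suc k}" unfolding b'_def using b(2) by simp
    also have "\<dots> = {Suc (Suc k)..n}"
    proof
      show "(\<lambda>u. u + Suc k) ` {1..n - Suc k} \<subseteq> {Suc (Suc k)..n}"
      proof
        fix j assume "j \<in> (\<lambda>u. u + Suc k) ` {1..n - Suc k}"
        then obtain u where u: "u \<in> {1..n - Suc k}" "j = u + Suc k" by (elim imageE)
        then have "1 \<le> u" "u \<le> n - Suc k" by auto
        then have "Suc (Suc k) \<le> u + Suc k" "u + Suc k \<le> n" by linarith+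
        then show "j \<in> {Suc (Suc k)..n}" using u(2) by simp
      qed
      show "{Suc (Suc k)..n} \<subseteq> (\<lambda>u. u + Suc k) ` {1..n - Suc k}"
      proof
        fix j assume j: "j \<in> {Suc (Suc k)..n}"
        have "j = (j - Suc k) + Suc k" using j by simp
        moreover have "Suc (Suc k) \<le> j" "j \<le> n" using j by auto
        then have "1 \<le> j - Suc k" "j - Suc k \<le> n - Suc k" by linarith+
        then have "j - Suc k \<in> {1..n - Suc k}" by simp
        ultimately show "j \<in> (\<lambda>u. u + Suc k) ` {1..n - Suc k}" by (rule image_eqI)
      qed
    qed
    finally show ?thesis .
  qed
  have db': "distinct b'" unfolding b'_def using b(1) by (simp add: distinct_map inj_on_def)
  have la: "length a = k" using distinct_card[OF a(1)] a(2) by simp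
  have lb': "length b' = n - Suc k" unfolding b'_def using distinct_card[OF b(1)] b(2) by simp
  define rest where "rest = mrg S 2 a b'"
  have Pa: "\<forall>y\<in>set a. y < Suc k" using a(2) by auto
  have Pb: "\<forall>y\<in>set b'. \<not> y < Suc k" "\<forall>y\<in>set b'. Suc k < y" using sb' by auto
  have fa: "filter (\<lambda>u. u < Suc k) rest = a" unfolding rest_def by (rule mrg_filter1[OF Pa Pb(1)])
  have fb: "filter (\<lambda>u. Suc k < u) rest = b'" unfolding rest_def
    by (rule mrg_filter2) (use a(2) Pb(2) in auto)
  have mb: "map (\<lambda>u. u - Suc k) b' = b" unfolding b'_def by (simp add: comp_def)
  have Sr: "Sv (Suc k) rest = S"
  proof -
    have "S \<inter> {2..} = S" using S(1) by auto
    have "{j + 2 |j. j < length rest \<and> rest ! j < Suc k} = S \<inter> {2..}"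
      unfolding rest_def
    proof (rule pos_mrg[OF Pa Pb(1)])
      show "card (S \<inter> {2..}) = length a" using \<open>S \<inter> {2..} = S\<close> S(2) la by simp
      show "S \<subseteq> {..<2 + length a + length b'}" using S(1) la lb' knn by auto
    qed
    then show ?thesis using \<open>S \<inter> {2..} = S\<close> unfolding Sv_def by simp
  qed
  have setr: "set rest = set a \<union> set b'" unfolding rest_def by (rule set_mrg)
  have "Suc k # rest \<in> lin_ext n r"
    unfolding lin_ext_alt
  proof (intro CollectI conjI)
    have "distinct rest" unfolding rest_def
      by (rule distinct_mrg[OF a(1) db']) (use a(2) sb' in auto)
    moreover have "Suc k \<notin> set rest" using setr a(2) sb' by auto
    ultimately show "distinct (Suc k # rest)" by simp
    show "set (Suc k # rest) = {1..n}" using setr a(2) sb' knn by auto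
    have "sorted_wrt (Rl r) rest" unfolding rest_def
    proof (rule sorted_mrg)
      show "sorted_wrt (Rl r) a" using a(3)
        by (rule sorted_wrt_mono_rel[rotated]) (use a(2) in \<open>auto simp: Rl_def ra_def\<close>)
      have "sorted_wrt (\<lambda>x y. Rl r (x + Suc k) (y + Suc k)) b"
        using b(3)
      proof (rule sorted_wrt_mono_rel[rotated])
        fix x y assume xy: "x \<in> set b" "y \<in> set b" "Rl (rb (Suc k) r) x y"
        show "Rl r (x + Suc k) (y + Suc k)"
        proof (cases "(y + Suc k, x + Suc k) \<in> r")
          case True
          then have "(y, x) \<in> rb (Suc k) r" using xy b(2) unfolding rb_def by auto
          then have "y = x" using xy(3) unfolding Rl_def by auto
          then show ?thesis unfolding Rl_def by simp
        qed (simp add: Rl_def)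
      qed
      then show "sorted_wrt (Rl r) b'" unfolding b'_def sorted_wrt_map by simp
      show "\<forall>u\<in>set a. \<forall>w\<in>set b'. Rl r u w \<and> Rl r w u"
      proof (intro ballI)
        fix u w assume "u \<in> set a" "w \<in> set b'"
        then have "u < Suc k" "Suc k < w" using a(2) sb' by auto
        then have "(u, w) \<notin> r \<and> (w, u) \<notin> r" by (rule cross[OF po[OF fp rl v] rl v])
        then show "Rl r u w \<and> Rl r w u" unfolding Rl_def by simp
      qed
    qed
    moreover have "\<forall>y\<in>set rest. Rl r (Suc k) y" using rootv unfolding Rl_def by blast
    ultimately show "sorted_wrt (Rl r) (Suc k # rest)" by simp
  qed
  moreover have "Phi (Suc k) rest = t" unfolding Phi_def tt using Sr fa fb mb by simp
  ultimately show ?thesis by blast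
qed

lemma phi_bij: "bij_betw (Phi (Suc k)) {rest. Suc k # rest \<in> lin_ext n r} Tgt"
  unfolding bij_betw_def
proof
  show "inj_on (Phi (Suc k)) {rest. Suc k # rest \<in> lin_ext n r}" by (rule phi_inj)
  show "Phi (Suc k) ` {rest. Suc k # rest \<in> lin_ext n r} = Tgt"
  proof
    show "Phi (Suc k) ` {rest. Suc k # rest \<in> lin_ext n r} \<subseteq> Tgt" using phi_in by blast
    show "Tgt \<subseteq> Phi (Suc k) ` {rest. Suc k # rest \<in> lin_ext n r}"
    proof
      fix t assume "t \<in> Tgt"
      then obtain rest where "Suc k # rest \<in> lin_ext n r" "Phi (Suc k) rest = t"
        using phi_surj by blast
      then show "t \<in> Phi (Suc k) ` {rest. Suc k # rest \<in> lin_ext n r}" by blast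
    qed
  qed
qed

lemma root_sum:
  "(\<Sum>rest\<in>{rest. Suc k # rest \<in> lin_ext n r}. wt_perm x (Suc k # rest))
   = (\<Sum>S\<in>{S. S \<subseteq> {2..n} \<and> card S = k}. wt_set x S)
     * (\<Sum>a\<in>lin_ext k (ra (Suc k) r). wt_perm x a)
     * (\<Sum>b\<in>lin_ext (n - Suc k) (rb (Suc k) r). wt_perm (\<lambda>i. x (i + Suc k)) b)"
proof -
  define g where "g = (\<lambda>(S, a, b). wt_set x S * wt_perm x a * wt_perm (\<lambda>i. x (i + Suc k)) b)"
  have "(\<Sum>rest\<in>{rest. Suc k # rest \<in> lin_ext n r}. wt_perm x (Suc k # rest))
      = (\<Sum>rest\<in>{rest. Suc k # rest \<in> lin_ext n r}. g (Phi (Suc k) rest))"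
    by (intro sum.cong refl) (simp add: g_def Phi_def Sv_def)
  also have "\<dots> = (\<Sum>t\<in>Tgt. g t)" by (rule sum.reindex_bij_betw[OF phi_bij])
  also have "\<dots> = (\<Sum>S\<in>{S. S \<subseteq> {2..n} \<and> card S = k}. \<Sum>(a, b)\<in>lin_ext k (ra (Suc k) r) \<times> lin_ext (n - Suc k) (rb (Suc k) r).
                   wt_set x S * wt_perm x a * wt_perm (\<lambda>i. x (i + Suc k)) b)"
    unfolding g_def by (rule sum.cartesian_product[symmetric])
  also have "\<dots> = (\<Sum>S\<in>{S. S \<subseteq> {2..n} \<and> card S = k}. wt_set x S *
                   ((\<Sum>a\<in>lin_ext k (ra (Suc k) r). wt_perm x a)
                   * (\<Sum>b\<in>lin_ext (n - Suc k) (rb (Suc k) r). wt_perm (\<lambda>i. x (i + Suc k)) b)))"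
  proof (rule sum.cong[OF refl])
    fix S
    let ?A = "lin_ext k (ra (Suc k) r)" and ?B = "lin_ext (n - Suc k) (rb (Suc k) r)"
    let ?g = "\<lambda>a. wt_perm x a" and ?h = "\<lambda>b. wt_perm (\<lambda>i. x (i + Suc k)) b"
    have "(\<Sum>(a, b)\<in>?A \<times> ?B. wt_set x S * ?g a * ?h b) = (\<Sum>a\<in>?A. \<Sum>b\<in>?B. wt_set x S * (?g a * ?h b))"
      by (subst sum.cartesian_product[symmetric]) (simp add: mult.assoc)
    also have "\<dots> = wt_set x S * (\<Sum>a\<in>?A. \<Sum>b\<in>?B. ?g a * ?h b)"
      by (simp add: sum_distrib_left)
    also have "(\<Sum>a\<in>?A. \<Sum>b\<in>?B. ?g a * ?h b) = sum ?g ?A * sum ?h ?B"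
      by (rule sum_product[symmetric])
    finally show "(\<Sum>(a, b)\<in>?A \<times> ?B. wt_set x S * ?g a * ?h b) = wt_set x S * (sum ?g ?A * sum ?h ?B)" .
  qed
  also have "\<dots> = (\<Sum>S\<in>{S. S \<subseteq> {2..n} \<and> card S = k}. wt_set x S)
     * (\<Sum>a\<in>lin_ext k (ra (Suc k) r). wt_perm x a)
     * (\<Sum>b\<in>lin_ext (n - Suc k) (rb (Suc k) r). wt_perm (\<lambda>i. x (i + Suc k)) b)"
    by (simp add: sum_distrib_right mult.assoc)
  finally show ?thesis .
qed

end



lemma prod_ivl_split: "(\<Prod>i\<in>{1..a+b}. f i) = (\<Prod>i\<in>{1..a}. f i) * (\<Prod>i\<in>{1..b}. f (i + (a::nat)))"
proof (induct b)
  case 0 then show ?case by simp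
next
  case (Suc b)
  have "(\<Prod>i\<in>{1..a + Suc b}. f i) = (\<Prod>i\<in>{1..a + b}. f i) * f (Suc (a + b))"
    by (simp add: prod.cl_ivl_Suc)
  also have "(\<Prod>i\<in>{1..Suc b}. f (i + a)) = (\<Prod>i\<in>{1..b}. f (i + a)) * f (Suc b + a)"
    by (simp add: prod.cl_ivl_Suc)
  ultimately show ?case using Suc by (simp add: algebra_simps)
qed

lemma lin_ext_decomp:
  assumes po: "partial_order_on {1..n} r" and n: "1 \<le> n"
  shows "(\<Sum>w\<in>lin_ext n r. f w) = (\<Sum>v\<in>{v. root n r v}. \<Sum>rest\<in>{rest. v # rest \<in> lin_ext n r}. f (v # rest))"
proof -
  let ?I = "SIGMA v:{v. root n r v}. {rest. v # rest \<in> lin_ext n r}"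
  have eq: "lin_ext n r = (\<lambda>(v, rest). v # rest) ` ?I"
  proof
    show "lin_ext n r \<subseteq> (\<lambda>(v, rest). v # rest) ` ?I"
    proof
      fix w assume w: "w \<in> lin_ext n r"
      then have h: "distinct w" "set w = {1..n}" "sorted_wrt (Rl r) w" unfolding lin_ext_alt by auto
      have "w \<noteq> []"
      proof
        assume "w = []"
        then have "{1..n} = ({} :: nat set)" using h(2) by simp
        then show False using n by simp
      qed
      then obtain v rest where wv: "w = v # rest" by (cases w) auto
      have "root n r v" unfolding root_def
      proof (intro conjI allI impI)
        have "v \<in> set w" using wv by simp
        then show "v \<in> {1..n}" using h(2) by simp
        fix u assume uv: "(u, v) \<in> r"
        have "u \<in> {1..n}" using po_sub[OF po uv] by (rule conjunct1)
        then have "u \<in> set w" using h(2) by simp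
        then have "u = v \<or> u \<in> set rest" using wv by simp
        then show "u = v"
        proof
          assume "u \<in> set rest"
          then have "Rl r v u" using h(3) wv by simp
          then show "u = v" using uv unfolding Rl_def by auto
        qed
      qed
      moreover have "v # rest \<in> lin_ext n r" using w wv by simp
      ultimately have "(v, rest) \<in> ?I" by simp
      then show "w \<in> (\<lambda>(v, rest). v # rest) ` ?I" unfolding wv by (rule rev_image_eqI) simp
    qed
    show "(\<lambda>(v, rest). v # rest) ` ?I \<subseteq> lin_ext n r"
    proof
      fix w assume "w \<in> (\<lambda>(v, rest). v # rest) ` ?I"
      then obtain z where z: "z \<in> ?I" "w = (\<lambda>(v, rest). v # rest) z" by (elim imageE)
      obtain v rest where "z = (v, rest)" by (cases z)
      then show "w \<in> lin_ext n r" using z by simp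
    qed
  qed
  have inj: "inj_on (\<lambda>(v, rest). v # rest) ?I" by (auto simp: inj_on_def)
  have finR: "finite {v. root n r v}"
    by (rule finite_subset[of _ "{1..n}"]) (auto simp: root_def)
  have finT: "finite {rest. v # rest \<in> lin_ext n r}" for v
  proof (rule finite_subset)
    show "{rest. v # rest \<in> lin_ext n r} \<subseteq> {xs. set xs \<subseteq> {1..n} \<and> length xs \<le> n}"
    proof
      fix rest assume "rest \<in> {rest. v # rest \<in> lin_ext n r}"
      then have h: "distinct (v # rest)" "set (v # rest) = {1..n}" unfolding lin_ext_alt by auto
      have "length (v # rest) = n" using distinct_card[OF h(1)] h(2) by simp
      then have "length rest \<le> n" by simp
      moreover have "set rest \<subseteq> {1..n}" by (metis h(2) set_subset_Cons)
      ultimately show "rest \<in> {xs. set xs \<subseteq> {1..n} \<and> length xs \<le> n}" by simp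
    qed
    show "finite {xs. set xs \<subseteq> {1..n} \<and> length xs \<le> n}" by (rule finite_lists_length_le) simp
  qed
  have "(\<Sum>w\<in>lin_ext n r. f w) = (\<Sum>w\<in>(\<lambda>(v, rest). v # rest) ` ?I. f w)"
    by (rule arg_cong[where f="sum f", OF eq])
  also have "\<dots> = (\<Sum>z\<in>?I. f ((\<lambda>(v, rest). v # rest) z))"
    using sum.reindex[OF inj, of f] by (simp only: comp_def)
  also have "\<dots> = (\<Sum>(v, rest)\<in>?I. f (v # rest))"
    by (rule sum.cong[OF refl]) (simp add: case_prod_beta)
  also have "\<dots> = (\<Sum>v\<in>{v. root n r v}. \<Sum>rest\<in>{rest. v # rest \<in> lin_ext n r}. f (v # rest))"
  proof (rule sum.Sigma[OF finR, symmetric])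
    show "\<forall>v\<in>{v. root n r v}. finite {rest. v # rest \<in> lin_ext n r}" using finT by blast
  qed
  finally show ?thesis .
qed

definition Dv :: "(nat \<Rightarrow> 'a::field) \<Rightarrow> (nat \<times> nat) set \<Rightarrow> nat \<Rightarrow> 'a" where
  "Dv x r i = brk x (Min (up_set r i) - 1) (card (up_set r i))"

lemma Dv_nz:
  assumes gen: "\<And>j m. 0 < m \<Longrightarrow> brk x j m \<noteq> 0" and po: "partial_order_on {1..n} r"
  shows "(\<Prod>i\<in>{1..n}. Dv x r i) \<noteq> 0"
proof -
  have "Dv x r i \<noteq> 0" if i: "i \<in> {1..n}" for i
  proof -
    have "i \<in> up_set r i" using po_refl[OF po i] by (simp add: up_set_def)
    then have "card (up_set r i) > 0" using fin_up[OF po] card_gt_0_iff by blast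
    then show ?thesis unfolding Dv_def by (rule gen)
  qed
  then show ?thesis by simp
qed



lemma main:
  fixes x :: "nat \<Rightarrow> 'a::field"
  shows "(\<And>j m. 0 < m \<Longrightarrow> brk x j m \<noteq> 0) \<Longrightarrow> forest_poset n r \<Longrightarrow> recursively_labelled n r \<Longrightarrow>
    (\<Sum>w\<in>lin_ext n r. wt_perm x w) = qfact x n / (\<Prod>i\<in>{1..n}. Dv x r i)"
proof (induction n arbitrary: x r rule: less_induct)
  case (less n)
  note gen = less.prems(1) and fp = less.prems(2) and rl = less.prems(3)
  have po: "partial_order_on {1..n} r" using fp unfolding forest_poset_def by blast
  show ?case
  proof (cases "n = 0")
    case True
    have "lin_ext n r = {[]}" unfolding lin_ext_alt using True by auto
    then show ?thesis using True by (simp add: qfact_def)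
  next
    case False
    then have n1: "1 \<le> n" by simp
    define Dall where "Dall = (\<Prod>i\<in>{1..n}. Dv x r i)"
    define Q where "Q = qfact (\<lambda>i. x (i + 1)) (n - 1)"
    have Dall_nz: "Dall \<noteq> 0" unfolding Dall_def by (rule Dv_nz[OF gen po])
    have termv: "(\<Sum>rest\<in>{rest. v # rest \<in> lin_ext n r}. wt_perm x (v # rest)) = Q * Dv x r v / Dall"
      if rv: "root n r v" for v
    proof -
      obtain k where vk: "v = Suc k" using rv unfolding root_def by (cases v) auto
      have rk: "root n r (Suc k)" using rv vk by simp
      have kn: "k < n" by (rule kn[OF fp rl rk])
      define m where "m = n - Suc k"
      define x' where "x' = (\<lambda>i. x (i + Suc k))"
      have gen': "\<And>j m. 0 < m \<Longrightarrow> brk x' j m \<noteq> 0" unfolding x'_def brk_shift using gen by blast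
      have IHa: "(\<Sum>a\<in>lin_ext k (ra (Suc k) r). wt_perm x a) = qfact x k / (\<Prod>i\<in>{1..k}. Dv x (ra (Suc k) r) i)"
        using less.IH[OF kn gen ra_forest[OF fp rl rk] ra_reclab[OF fp rl rk]] .
      have mn: "m < n" unfolding m_def using kn by simp
      have IHb: "(\<Sum>b\<in>lin_ext m (rb (Suc k) r). wt_perm x' b) = qfact x' m / (\<Prod>i\<in>{1..m}. Dv x' (rb (Suc k) r) i)"
        using less.IH[OF mn gen', of "rb (Suc k) r"] rb_forest[OF fp rl rk] rb_reclab[OF fp rl rk]
        unfolding m_def by blast
      have WS: "(\<Sum>S\<in>{S. S \<subseteq> {2..n} \<and> card S = k}. wt_set x S) = (\<Prod>j<k. brk x (1 + j) (n - 1 - j)) / qfact x k"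
        by (rule wt_set_sum[OF n1])
      have Da: "(\<Prod>i\<in>{1..k}. Dv x (ra (Suc k) r) i) = (\<Prod>i\<in>{1..k}. Dv x r i)"
      proof (rule prod.cong[OF refl])
        fix i assume "i \<in> {1..k}"
        then have "i < Suc k" by simp
        then show "Dv x (ra (Suc k) r) i = Dv x r i" unfolding Dv_def using up_ra[OF fp rl rk] by simp
      qed
      have Db: "(\<Prod>i\<in>{1..m}. Dv x' (rb (Suc k) r) i) = (\<Prod>i\<in>{1..m}. Dv x r (i + Suc k))"
      proof (rule prod.cong[OF refl])
        fix i assume i: "i \<in> {1..m}"
        have poB: "partial_order_on {1..m} (rb (Suc k) r)" unfolding m_def by (rule rb_po[OF po])
        have rlB: "recursively_labelled m (rb (Suc k) r)" unfolding m_def by (rule rb_reclab[OF fp rl rk])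
        have "Dv x' (rb (Suc k) r) i = (\<Sum>j\<in>up_set (rb (Suc k) r) i. x' j)"
          unfolding Dv_def by (rule D_sum[OF poB rlB i])
        also have "\<dots> = (\<Sum>j\<in>up_set (rb (Suc k) r) i. x (j + Suc k))" unfolding x'_def ..
        also have "\<dots> = (\<Sum>j\<in>(\<lambda>j. j + Suc k) ` up_set (rb (Suc k) r) i. x j)"
          by (rule sum.reindex[symmetric, unfolded comp_def]) (simp add: inj_on_def)
        also have "(\<lambda>j. j + Suc k) ` up_set (rb (Suc k) r) i = up_set r (i + Suc k)"
          using i by (intro up_rb[OF fp rl rk]) simp
        also have "(\<Sum>j\<in>up_set r (i + Suc k). x j) = Dv x r (i + Suc k)"
        proof -
          have "i + Suc k \<in> {1..n}" using i unfolding m_def by auto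
          then show ?thesis unfolding Dv_def by (rule D_sum[OF po rl, symmetric])
        qed
        finally show "Dv x' (rb (Suc k) r) i = Dv x r (i + Suc k)" .
      qed
      have split: "Dall = (\<Prod>i\<in>{1..k}. Dv x r i) * Dv x r (Suc k) * (\<Prod>i\<in>{1..m}. Dv x r (i + Suc k))"
      proof -
        have nn: "n = k + (1 + m)" unfolding m_def using kn by simp
        have "Dall = (\<Prod>i\<in>{1..k}. Dv x r i) * (\<Prod>i\<in>{1..1 + m}. Dv x r (i + k))"
          unfolding Dall_def nn by (rule prod_ivl_split)
        also have "(\<Prod>i\<in>{1..1 + m}. Dv x r (i + k)) = (\<Prod>i\<in>{1..1}. Dv x r (i + k)) * (\<Prod>i\<in>{1..m}. Dv x r (i + 1 + k))"
          by (rule prod_ivl_split)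
        also have "(\<Prod>i\<in>{1..m}. Dv x r (i + 1 + k)) = (\<Prod>i\<in>{1..m}. Dv x r (i + Suc k))" by simp
        finally show ?thesis by (simp add: mult.assoc)
      qed
      have QS: "(\<Prod>j<k. brk x (1 + j) (n - 1 - j)) * qfact x' m = Q"
        unfolding Q_def x'_def m_def using qfact_split[of k "n - 1" x] kn by simp
      have qk: "qfact x k \<noteq> 0" by (rule qfact_nz[OF gen])
      define A where "A = (\<Prod>i\<in>{1..k}. Dv x r i)"
      define B where "B = (\<Prod>i\<in>{1..m}. Dv x r (i + Suc k))"
      have ABnz: "A \<noteq> 0" "B \<noteq> 0" "Dv x r (Suc k) \<noteq> 0" using Dall_nz split unfolding A_def B_def by auto
      have "(\<Sum>rest\<in>{rest. v # rest \<in> lin_ext n r}. wt_perm x (v # rest))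
          = ((\<Prod>j<k. brk x (1 + j) (n - 1 - j)) / qfact x k) * (qfact x k / A) * (qfact x' m / B)"
        using root_sum[OF fp rl rk, of x] WS IHa IHb Da Db unfolding vk x'_def[symmetric] m_def[symmetric] A_def B_def
        by simp
      also have "\<dots> = ((\<Prod>j<k. brk x (1 + j) (n - 1 - j)) * qfact x' m) / (A * B)"
        using qk by (simp add: field_simps)
      also have "\<dots> = Q / (A * B)" using QS by simp
      also have "\<dots> = Q * Dv x r v / Dall"
        unfolding split vk A_def[symmetric] B_def[symmetric] using ABnz by (simp add: field_simps)
      finally show ?thesis .
    qed
    have "(\<Sum>w\<in>lin_ext n r. wt_perm x w)
        = (\<Sum>v\<in>{v. root n r v}. \<Sum>rest\<in>{rest. v # rest \<in> lin_ext n r}. wt_perm x (v # rest))"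
      by (rule lin_ext_decomp[OF po n1])
    also have "\<dots> = (\<Sum>v\<in>{v. root n r v}. Q * Dv x r v / Dall)"
      using termv by (intro sum.cong) auto
    also have "\<dots> = Q * (\<Sum>v\<in>{v. root n r v}. Dv x r v) / Dall"
      by (simp add: sum_divide_distrib[symmetric] sum_distrib_left)
    also have "(\<Sum>v\<in>{v. root n r v}. Dv x r v) = brk x 0 n"
      unfolding Dv_def by (rule roots_sum[OF fp rl])
    also have "Q * brk x 0 n = qfact x n"
    proof -
      have "n = Suc (n - 1)" using n1 by simp
      then have "qfact x n = brk x 0 (Suc (n - 1)) * qfact (\<lambda>i. x (i + 1)) (n - 1)"
        using qfact_Suc[of x "n - 1"] by simp
      then show ?thesis unfolding Q_def using \<open>n = Suc (n - 1)\<close> by (simp add: mult.commute)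
    qed
    finally show ?thesis unfolding Dall_def .
  qed
qed

theorem theorem1p1:
  fixes x :: "nat \<Rightarrow> 'a::field_char_0" and n :: nat and r :: "(nat \<times> nat) set"
  assumes generic: "\<And>j m. 0 < m \<Longrightarrow> brk x j m \<noteq> 0"
    and forest: "forest_poset n r"
    and reclab: "recursively_labelled n r"
  shows "(\<Sum>w\<in>lin_ext n r. wt_perm x w)
         = qfact x n / (\<Prod>i\<in>{1..n}. brk x (Min (up_set r i) - 1) (card (up_set r i)))"
  using main[OF generic forest reclab] unfolding Dv_def .

end
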